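(* For every fixed positive integer $r$ there exist positive constants $c_0$ and $c$, depending only on $r$, such that the following holds. Let $d \geq 1$ and $h \geq 0$ be fixed integers and put $D = \max\{d,h\}$. Then for all positive integers $t$ and $x$ with $x \leq \frac{c_0}{D^r}\, t$, $$R(t,d,h,r;x] \geq \frac{c + o(1)}{D^{r+1}},$$ where $o(1)$ denotes a function of $t$ that tends to $0$ as $t \to \infty$.
   Context: Let $T=(t_{ij})$ be a $t\times n$ binary matrix over $\{0,1\}$. For $j\in[n]=\{1,\dots,n\}$ let $C_j=\{i\in[t]: t_{ij}=1\}$ be the support of the $j$th column. For disjoint sets $A,B\subseteq[n]$ define $Z_T(A,B)=\left|\left(\bigcap_{j\in B}C_j\right)\setminus\left(\bigcup_{j\in A}C_j\right)\right|$ and $Y_T(A,B)=\left|\left(\bigcap_{j\in B}C_j\right)\cap\left(\bigcup_{j\in A}C_j\right)\right|$. For positive integers $d,r,z$, $T$ is $(d,r;z]$-disjunct if $Z_T(A,B)\geq z$ for every pair of disjoint $A,B\subseteq[n]$ with $|A|=d$, $|B|=r$. For a positive integer $r$ and nonnegative integers $h,y$, $T$ is $(h,r;y]$-inclusive if $Y_T(A,B)\leq y$ for every pair of disjoint $A,B\subseteq[n]$ with $|A|=h$, $|B|=r$. For positive integers $d,r,x$ and a nonnegative integer $h$, $T$ is $(d,h,r;x]$-inclusively disjunct if there exist integers $z>0$ and $y\geq 0$ with $z-y\geq x$ such that $T$ is both $(d,r;z]$-disjunct and $(h,r;y]$-inclusive. Let $N(t,d,h,r;x]$ be the maximum $n$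 such that a $t\times n$ $(d,h,r;x]$-inclusively disjunct matrix exists, and $R(t,d,h,r;x] = \frac{\log_2 N(t,d,h,r;x]}{t}$. *)

theory Defs
  imports Complex_Main
begin

text \<open>A t x n binary matrix T = (t_ij) is represented by a predicate T :: nat => nat => bool,
  where T i j means t_ij = 1; only the entries with i in [t] = {1..t}, j in [n] = {1..n} matter.\<close>

definition col :: "nat \<Rightarrow> (nat \<Rightarrow> nat \<Rightarrow> bool) \<Rightarrow> nat \<Rightarrow> nat set" where
  "col t T j = {i \<in> {1..t}. T i j}"

definition Zval :: "nat \<Rightarrow> (nat \<Rightarrow> nat \<Rightarrow> bool) \<Rightarrow> nat set \<Rightarrow> nat set \<Rightarrow> nat" where
  "Zval t T A B = card (({1..t} \<inter> (\<Inter>j\<in>B. col t T j)) - (\<Union>j\<in>A. col t T j))"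

definition Yval :: "nat \<Rightarrow> (nat \<Rightarrow> nat \<Rightarrow> bool) \<Rightarrow> nat set \<Rightarrow> nat set \<Rightarrow> nat" where
  "Yval t T A B = card (({1..t} \<inter> (\<Inter>j\<in>B. col t T j)) \<inter> (\<Union>j\<in>A. col t T j))"

definition disjunct :: "nat \<Rightarrow> nat \<Rightarrow> (nat \<Rightarrow> nat \<Rightarrow> bool) \<Rightarrow> nat \<Rightarrow> nat \<Rightarrow> nat \<Rightarrow> bool" where
  "disjunct t n T d r z \<longleftrightarrow>
     (\<forall>A B. A \<subseteq> {1..n} \<and> B \<subseteq> {1..n} \<and> A \<inter> B = {} \<and> card A = d \<and> card B = r
        \<longrightarrow> Zval t T A B \<ge> z)"

definition inclusive :: "nat \<Rightarrow> nat \<Rightarrow> (nat \<Rightarrow> nat \<Rightarrow> bool) \<Rightarrow> nat \<Rightarrow> nat \<Rightarrow> nat \<Rightarrow> bool" where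
  "inclusive t n T h r y \<longleftrightarrow>
     (\<forall>A B. A \<subseteq> {1..n} \<and> B \<subseteq> {1..n} \<and> A \<inter> B = {} \<and> card A = h \<and> card B = r
        \<longrightarrow> Yval t T A B \<le> y)"

definition incl_disjunct ::
  "nat \<Rightarrow> nat \<Rightarrow> (nat \<Rightarrow> nat \<Rightarrow> bool) \<Rightarrow> nat \<Rightarrow> nat \<Rightarrow> nat \<Rightarrow> nat \<Rightarrow> bool" where
  "incl_disjunct t n T d h r x \<longleftrightarrow>
     (\<exists>z y. z > 0 \<and> int z - int y \<ge> int x \<and> disjunct t n T d r z \<and> inclusive t n T h r y)"

definition Nmax :: "nat \<Rightarrow> nat \<Rightarrow> nat \<Rightarrow> nat \<Rightarrow> nat \<Rightarrow> nat" where
  "Nmax t d h r x = (GREATEST n. \<exists>T. incl_disjunct t n T d h r x)"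

definition Rate :: "nat \<Rightarrow> nat \<Rightarrow> nat \<Rightarrow> nat \<Rightarrow> nat \<Rightarrow> real" where
  "Rate t d h r x = log 2 (real (Nmax t d h r x)) / real t"

end

theory Submission
  imports Defs "HOL-Probability.Probability"
begin

definition RowP :: "nat \<Rightarrow> real \<Rightarrow> (nat \<Rightarrow> bool) pmf" where
  "RowP N p = Pi_pmf {1..N} False (\<lambda>_. bernoulli_pmf p)"

definition Omg :: "nat \<Rightarrow> nat \<Rightarrow> real \<Rightarrow> (nat \<Rightarrow> nat \<Rightarrow> bool) pmf" where
  "Omg t N p = Pi_pmf {1..t} (\<lambda>_. False) (\<lambda>_. RowP N p)"

lemma rows_prob:
  assumes "S \<subseteq> {1..t}"
  shows "measure_pmf.prob (Omg t N p) {\<omega>. \<forall>\<rho>\<in>S. \<omega> \<rho> \<in> E} = (measure_pmf.prob (RowP N p) E) ^ card S"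
proof -
  have fS: "finite S" using assms by (meson finite_atLeastAtMost finite_subset)
  have "{\<omega>. \<forall>\<rho>\<in>S. \<omega> \<rho> \<in> E} = Pi {1..t} (\<lambda>\<rho>. if \<rho> \<in> S then E else UNIV)"
    using assms by (auto simp: Pi_def)
  hence "measure_pmf.prob (Omg t N p) {\<omega>. \<forall>\<rho>\<in>S. \<omega> \<rho> \<in> E}
     = (\<Prod>\<rho>\<in>{1..t}. measure_pmf.prob (RowP N p) (if \<rho> \<in> S then E else UNIV))"
    unfolding Omg_def by (simp add: measure_Pi_pmf_Pi)
  also have "\<dots> = (\<Prod>\<rho>\<in>{1..t}. if \<rho> \<in> S then measure_pmf.prob (RowP N p) E else 1)"
    by (intro prod.cong) auto
  also have "\<dots> = (\<Prod>\<rho>\<in>S. measure_pmf.prob (RowP N p) E)"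
    using assms by (subst prod.If_cases) (auto simp: Int_absorb1)
  finally show ?thesis by simp
qed

lemma row_prob:
  assumes "A \<subseteq> {1..N}" "B \<subseteq> {1..N}" "A \<inter> B = {}" "0 \<le> p" "p \<le> 1"
  shows "measure_pmf.prob (RowP N p) {v. (\<forall>b\<in>B. v b) \<and> (\<forall>a\<in>A. \<not> v a)} = p ^ card B * (1 - p) ^ card A"
proof -
  have fA: "finite A" "finite B" using assms by (meson finite_atLeastAtMost finite_subset)+
  have "{v. (\<forall>b\<in>B. v b) \<and> (\<forall>a\<in>A. \<not> v a)} = Pi {1..N} (\<lambda>j. if j \<in> B then {True} else if j \<in> A then {False} else UNIV)"
    using assms by (auto simp: Pi_def subset_iff)
  hence "measure_pmf.prob (RowP N p) {v. (\<forall>b\<in>B. v b) \<and> (\<forall>a\<in>A. \<not> v a)}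
     = (\<Prod>j\<in>{1..N}. measure_pmf.prob (bernoulli_pmf p) (if j \<in> B then {True} else if j \<in> A then {False} else UNIV))"
    unfolding RowP_def by (simp add: measure_Pi_pmf_Pi)
  also have "\<dots> = (\<Prod>j\<in>{1..N}. if j \<in> B then p else if j \<in> A then 1 - p else 1)"
    using assms by (intro prod.cong) (auto simp: measure_pmf_single)
  also have "\<dots> = (\<Prod>j\<in>B. p) * (\<Prod>j\<in>{1..N} - B. if j \<in> A then 1 - p else 1)"
    using assms by (subst prod.If_cases) (auto simp: Int_absorb1 Diff_eq)
  also have "(\<Prod>j\<in>{1..N} - B. if j \<in> A then 1 - p else 1) = (\<Prod>j\<in>A. 1 - p)"
    using assms by (subst prod.If_cases) (auto simp: Int_absorb1 intro!: arg_cong[where f="\<lambda>X. (1 - p) ^ card X"])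
  finally show ?thesis by simp
qed

lemma yrow_prob:
  fixes p :: real
  assumes "A \<subseteq> {1..N}" "B \<subseteq> {1..N}" "A \<inter> B = {}" "0 \<le> p" "p \<le> 1"
  shows "measure_pmf.prob (RowP N p) {v. (\<forall>b\<in>B. v b) \<and> (\<exists>a\<in>A. v a)} \<le> card A * p ^ (card B + 1)"
proof -
  have fA: "finite A" "finite B" using assms by (meson finite_atLeastAtMost finite_subset)+
  have "measure_pmf.prob (RowP N p) {v. (\<forall>b\<in>B. v b) \<and> (\<exists>a\<in>A. v a)}
     \<le> measure_pmf.prob (RowP N p) (\<Union>a\<in>A. {v. (\<forall>b\<in>insert a B. v b) \<and> (\<forall>a\<in>{}. \<not> v a)})"
    by (intro measure_pmf.finite_measure_mono) auto
  also have "\<dots> \<le> (\<Sum>a\<in>A. measure_pmf.prob (RowP N p) {v. (\<forall>b\<in>insert a B. v b) \<and> (\<forall>a\<in>{}. \<not> v a)})"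
    using fA by (intro measure_pmf.finite_measure_subadditive_finite) auto
  also have "\<dots> = (\<Sum>a\<in>A. p ^ (card B + 1))"
  proof (intro sum.cong refl)
    fix a assume a: "a \<in> A"
    have "a \<notin> B" using a assms by auto
    thus "measure_pmf.prob (RowP N p) {v. (\<forall>b\<in>insert a B. v b) \<and> (\<forall>a\<in>{}. \<not> v a)} = p ^ (card B + 1)"
      using a assms fA by (subst row_prob) auto
  qed
  finally show ?thesis by simp
qed

lemma ksub_prob:
  fixes M :: "'a pmf" and q :: real
  assumes "finite X" "\<And>K. K \<subseteq> X \<Longrightarrow> card K = k \<Longrightarrow> measure_pmf.prob M (Ev K) \<le> q"
  shows "measure_pmf.prob M (\<Union>K\<in>{K. K \<subseteq> X \<and> card K = k}. Ev K) \<le> (card X choose k) * q"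
proof -
  have fin: "finite {K. K \<subseteq> X \<and> card K = k}" using assms(1) by auto
  have "measure_pmf.prob M (\<Union>K\<in>{K. K \<subseteq> X \<and> card K = k}. Ev K) \<le> (\<Sum>K\<in>{K. K \<subseteq> X \<and> card K = k}. measure_pmf.prob M (Ev K))"
    using fin by (intro measure_pmf.finite_measure_subadditive_finite) auto
  also have "\<dots> \<le> (\<Sum>K\<in>{K. K \<subseteq> X \<and> card K = k}. q)"
    by (intro sum_mono) (use assms in auto)
  also have "\<dots> = (card X choose k) * q"
    using n_subsets[OF assms(1), of k] by simp
  finally show ?thesis .
qed


lemma card_pairs:
  "card {(A,B). A \<subseteq> {1..N} \<and> B \<subseteq> {1..(N::nat)} \<and> A \<inter> B = {} \<and> card A = d \<and> card B = r} \<le> (N choose d) * (N choose r)"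
  "finite {(A,B). A \<subseteq> {1..N} \<and> B \<subseteq> {1..(N::nat)} \<and> A \<inter> B = {} \<and> card A = d \<and> card B = r}"
proof -
  have sub: "{(A,B). A \<subseteq> {1..N} \<and> B \<subseteq> {1..(N::nat)} \<and> A \<inter> B = {} \<and> card A = d \<and> card B = r}
    \<subseteq> {A. A \<subseteq> {1..N} \<and> card A = d} \<times> {B. B \<subseteq> {1..N} \<and> card B = r}" by auto
  have fin: "finite ({A. A \<subseteq> {1..N} \<and> card A = d} \<times> {B. B \<subseteq> {1..N} \<and> card B = r})" by auto
  show "card {(A,B). A \<subseteq> {1..N} \<and> B \<subseteq> {1..(N::nat)} \<and> A \<inter> B = {} \<and> card A = d \<and> card B = r} \<le> (N choose d) * (N choose r)"
    using card_mono[OF fin sub] by (simp add: card_cartesian_product n_subsets)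
  show "finite {(A,B). A \<subseteq> {1..N} \<and> B \<subseteq> {1..(N::nat)} \<and> A \<inter> B = {} \<and> card A = d \<and> card B = r}"
    using finite_subset[OF sub fin] .
qed

lemma exist_matrix:
  fixes p :: real
  assumes p: "0 \<le> p" "p \<le> 1" and Lm: "L * m \<le> t" and k1: "k1 \<le> L"
  and sum: "real ((N choose d) * (N choose r)) * (real (L choose k1) * (1 - p^r*(1-p)^d)^(m*k1))
          + real ((N choose h) * (N choose r)) * (real (t choose k2) * (real h * p^(r+1))^k2) < 1"
  shows "\<exists>T. disjunct t N T d r (L + 1 - k1) \<and> inclusive t N T h r (k2 - 1)"
proof -
  define Om where "Om = Omg t N p"
  define good where "good A B = {v::nat\<Rightarrow>bool. (\<forall>b\<in>B. v b) \<and> (\<forall>a\<in>A. \<not> v a)}" for A B :: "nat set"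
  define yr where "yr A B = {v::nat\<Rightarrow>bool. (\<forall>b\<in>B. v b) \<and> (\<exists>a\<in>A. v a)}" for A B :: "nat set"
  define blk where "blk l = {l*m+1..l*m+m}" for l
  define P1 where "P1 = {(A,B). A \<subseteq> {1..N} \<and> B \<subseteq> {1..N} \<and> A \<inter> B = {} \<and> card A = d \<and> card B = r}"
  define P2 where "P2 = {(A,B). A \<subseteq> {1..N} \<and> B \<subseteq> {1..N} \<and> A \<inter> B = {} \<and> card A = h \<and> card B = r}"
  define Bad1 where "Bad1 A B = (\<Union>K\<in>{K. K \<subseteq> {..<L} \<and> card K = k1}. {\<omega>. \<forall>\<rho>\<in>\<Union>(blk ` K). \<omega> \<rho> \<in> - good A B})" for A B
  define Bad2 where "Bad2 A B = (\<Union>K\<in>{K. K \<subseteq> {1..t} \<and> card K = k2}. {\<omega>. \<forall>\<rho>\<in>K. \<omega> \<rho> \<in> yr A B})" for A B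
  define g where "g = p^r*(1-p)^d"
  have blk_sub: "blk l \<subseteq> {1..t}" if "l < L" for l
  proof -
    have "Suc l * m \<le> L * m" using that by (intro mult_right_mono) auto
    thus ?thesis using Lm by (auto simp: blk_def)
  qed
  have blk_card: "card (blk l) = m" for l by (simp add: blk_def)
  have blk_disj: "blk l \<inter> blk l' = {}" if "l \<noteq> l'" for l l'
  proof (cases "l < l'")
    case True
    hence "Suc l * m \<le> l' * m" by (intro mult_right_mono) auto
    thus ?thesis by (auto simp: blk_def)
  next
    case False
    hence "Suc l' * m \<le> l * m" using that by (intro mult_right_mono) auto
    thus ?thesis by (auto simp: blk_def)
  qed
  have pB1: "measure_pmf.prob Om (Bad1 A B) \<le> real (L choose k1) * (1 - g)^(m*k1)" if "(A,B) \<in> P1" for A B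
  proof -
    have pg: "measure_pmf.prob (RowP N p) (- good A B) = 1 - g"
    proof -
      have "- good A B = space (measure_pmf (RowP N p)) - good A B" by auto
      hence "measure_pmf.prob (RowP N p) (- good A B) = 1 - measure_pmf.prob (RowP N p) (good A B)"
        using measure_pmf.prob_compl[of "good A B" "RowP N p"] by simp
      thus ?thesis using that p unfolding good_def g_def P1_def by (simp add: row_prob)
    qed
    have "measure_pmf.prob Om (Bad1 A B) \<le> real (card {..<L} choose k1) * (1 - g)^(m*k1)" unfolding Bad1_def
    proof (rule ksub_prob)
      fix K assume K: "K \<subseteq> {..<L}" "card K = k1"
      have fK: "finite K" using K finite_subset by blast
      have sub: "\<Union>(blk ` K) \<subseteq> {1..t}" using K blk_sub by auto
      have "card (\<Union>(blk ` K)) = (\<Sum>l\<in>K. card (blk l))"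
        by (intro card_UN_disjoint fK) (simp add: blk_def, use blk_disj in blast)
      also have "\<dots> = m * k1" using K by (simp add: blk_card)
      finally have c: "card (\<Union>(blk ` K)) = m * k1" .
      show "measure_pmf.prob Om {\<omega>. \<forall>\<rho>\<in>\<Union>(blk ` K). \<omega> \<rho> \<in> - good A B} \<le> (1 - g)^(m*k1)"
        unfolding Om_def using rows_prob[OF sub, of N p "- good A B"] pg c by simp
    qed simp
    thus ?thesis by simp
  qed
  have pB2: "measure_pmf.prob Om (Bad2 A B) \<le> real (t choose k2) * (real h * p^(r+1))^k2" if "(A,B) \<in> P2" for A B
  proof -
    have pg: "measure_pmf.prob (RowP N p) (yr A B) \<le> real h * p^(r+1)"
      using that p yrow_prob[of A N B p] unfolding yr_def P2_def by simp
    have "measure_pmf.prob Om (Bad2 A B) \<le> real (card {1..t} choose k2) * (real h * p^(r+1))^k2" unfolding Bad2_def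
    proof (rule ksub_prob)
      fix K assume K: "K \<subseteq> {1..t}" "card K = k2"
      show "measure_pmf.prob Om {\<omega>. \<forall>\<rho>\<in>K. \<omega> \<rho> \<in> yr A B} \<le> (real h * p^(r+1))^k2"
        unfolding Om_def using rows_prob[OF K(1)] pg K(2)
        by (simp add: power_mono)
    qed simp
    thus ?thesis by simp
  qed
  define Bad where "Bad = (\<Union>x\<in>P1. Bad1 (fst x) (snd x)) \<union> (\<Union>x\<in>P2. Bad2 (fst x) (snd x))"
  have fP1: "finite P1" and cP1: "card P1 \<le> (N choose d) * (N choose r)"
    using card_pairs unfolding P1_def by auto
  have fP2: "finite P2" and cP2: "card P2 \<le> (N choose h) * (N choose r)"
    using card_pairs unfolding P2_def by auto
  have "measure_pmf.prob Om Bad \<le> measure_pmf.prob Om (\<Union>x\<in>P1. Bad1 (fst x) (snd x)) + measure_pmf.prob Om (\<Union>x\<in>P2. Bad2 (fst x) (snd x))"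
    unfolding Bad_def by (rule measure_Un_le) auto
  also have "measure_pmf.prob Om (\<Union>x\<in>P1. Bad1 (fst x) (snd x)) \<le> (\<Sum>x\<in>P1. measure_pmf.prob Om (Bad1 (fst x) (snd x)))"
    using fP1 by (intro measure_pmf.finite_measure_subadditive_finite) auto
  also have "\<dots> \<le> (\<Sum>x\<in>P1. real (L choose k1) * (1 - g)^(m*k1))"
    using pB1 by (intro sum_mono) auto
  also have "\<dots> \<le> real ((N choose d) * (N choose r)) * (real (L choose k1) * (1 - g)^(m*k1))"
  proof -
    have "p^r \<le> 1" "(1-p)^d \<le> 1" "0 \<le> (1-p)^d" using p by (simp_all add: power_le_one)
    hence "0 \<le> 1 - g" unfolding g_def using mult_le_one[of "p^r" "(1-p)^d"] p by simp
    hence "0 \<le> real (L choose k1) * (1 - g)^(m*k1)" by simp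
    moreover have "real (card P1) \<le> real ((N choose d) * (N choose r))" using cP1 by linarith
    ultimately show ?thesis by (simp add: mult_right_mono)
  qed
  also have "measure_pmf.prob Om (\<Union>x\<in>P2. Bad2 (fst x) (snd x)) \<le> (\<Sum>x\<in>P2. measure_pmf.prob Om (Bad2 (fst x) (snd x)))"
    using fP2 by (intro measure_pmf.finite_measure_subadditive_finite) auto
  also have "\<dots> \<le> (\<Sum>x\<in>P2. real (t choose k2) * (real h * p^(r+1))^k2)"
    using pB2 by (intro sum_mono) auto
  also have "\<dots> \<le> real ((N choose h) * (N choose r)) * (real (t choose k2) * (real h * p^(r+1))^k2)"
  proof -
    have "0 \<le> real (t choose k2) * (real h * p^(r+1))^k2" using p by simp
    moreover have "real (card P2) \<le> real ((N choose h) * (N choose r))" using cP2 by linarith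
    ultimately show ?thesis by (simp add: mult_right_mono)
  qed
  finally have "measure_pmf.prob Om Bad < 1" using sum unfolding g_def by linarith
  hence "measure_pmf.prob Om (- Bad) > 0"
  proof -
    have "- Bad = space (measure_pmf Om) - Bad" by auto
    hence "measure_pmf.prob Om (- Bad) = 1 - measure_pmf.prob Om Bad"
      using measure_pmf.prob_compl[of Bad Om] by simp
    thus ?thesis using \<open>measure_pmf.prob Om Bad < 1\<close> by simp
  qed
  hence "- Bad \<noteq> {}" by auto
  then obtain \<omega> where om: "\<omega> \<notin> Bad" by blast
  show ?thesis
  proof (intro exI conjI)
    show "disjunct t N \<omega> d r (L + 1 - k1)"
      unfolding disjunct_def
    proof (intro allI impI)
      fix A B assume AB: "A \<subseteq> {1..N} \<and> B \<subseteq> {1..N} \<and> A \<inter> B = {} \<and> card A = d \<and> card B = r"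
      hence inP: "(A,B) \<in> P1" unfolding P1_def by auto
      hence nb: "\<omega> \<notin> Bad1 A B" using om unfolding Bad_def by force
      define Bb where "Bb = {l\<in>{..<L}. \<forall>\<rho>\<in>blk l. \<omega> \<rho> \<in> - good A B}"
      have cBb: "card Bb < k1"
      proof (rule ccontr)
        assume "\<not> card Bb < k1"
        then obtain K where "K \<subseteq> Bb" "card K = k1"
          by (meson not_less obtain_subset_with_card_n)
        hence "\<omega> \<in> Bad1 A B" unfolding Bad1_def Bb_def by auto
        thus False using nb by simp
      qed
      define G where "G = {..<L} - Bb"
      have cG: "card G \<ge> L + 1 - k1"
      proof -
        have "card G = L - card Bb" unfolding G_def by (subst card_Diff_subset) (auto simp: Bb_def)
        thus ?thesis using cBb by simp
      qed
      define Zs where "Zs = ({1..t} \<inter> (\<Inter>j\<in>B. col t \<omega> j)) - (\<Union>j\<in>A. col t \<omega> j)"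
      have ex: "\<exists>\<rho>\<in>blk l. \<rho> \<in> Zs" if "l \<in> G" for l
      proof -
        from that obtain \<rho> where r1: "\<rho> \<in> blk l" "\<omega> \<rho> \<in> good A B" unfolding G_def Bb_def by auto
        have "l < L" using that unfolding G_def by auto
        hence "\<rho> \<in> {1..t}" using r1 blk_sub by blast
        thus ?thesis using r1 unfolding Zs_def good_def col_def by auto
      qed
      define f where "f l = (SOME \<rho>. \<rho> \<in> blk l \<and> \<rho> \<in> Zs)" for l
      have f: "f l \<in> blk l \<and> f l \<in> Zs" if "l \<in> G" for l
        using ex[OF that] unfolding f_def by (metis (mono_tags, lifting) someI_ex)
      have "inj_on f G"
      proof (rule inj_onI)
        fix l l' assume ll: "l \<in> G" "l' \<in> G" "f l = f l'"
        hence "f l \<in> blk l \<inter> blk l'" using f[OF ll(1)] f[OF ll(2)] by simp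
        thus "l = l'" using blk_disj[of l l'] by (cases "l = l'") auto
      qed
      moreover have "f ` G \<subseteq> Zs" using f by auto
      moreover have "finite Zs" unfolding Zs_def by auto
      ultimately have "card G \<le> card Zs" using card_inj_on_le by blast
      thus "L + 1 - k1 \<le> Zval t \<omega> A B" using cG unfolding Zval_def Zs_def by simp
    qed
    show "inclusive t N \<omega> h r (k2 - 1)"
      unfolding inclusive_def
    proof (intro allI impI)
      fix A B assume AB: "A \<subseteq> {1..N} \<and> B \<subseteq> {1..N} \<and> A \<inter> B = {} \<and> card A = h \<and> card B = r"
      hence inP: "(A,B) \<in> P2" unfolding P2_def by auto
      hence nb: "\<omega> \<notin> Bad2 A B" using om unfolding Bad_def by force
      define Ys where "Ys = ({1..t} \<inter> (\<Inter>j\<in>B. col t \<omega> j)) \<inter> (\<Union>j\<in>A. col t \<omega> j)"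
      have "card Ys < k2"
      proof (rule ccontr)
        assume "\<not> card Ys < k2"
        then obtain K where K: "K \<subseteq> Ys" "card K = k2"
          by (meson not_less obtain_subset_with_card_n)
        hence "\<forall>\<rho>\<in>K. \<omega> \<rho> \<in> yr A B" unfolding Ys_def yr_def col_def by auto
        moreover have "K \<subseteq> {1..t}" using K unfolding Ys_def by auto
        ultimately have "\<omega> \<in> Bad2 A B" using K unfolding Bad2_def by auto
        thus False using nb by simp
      qed
      thus "Yval t \<omega> A B \<le> k2 - 1" unfolding Yval_def Ys_def by simp
    qed
  qed
qed



lemma pow_fact_le_exp:
  fixes y :: real assumes "0 \<le> y" shows "y ^ k / fact k \<le> exp y"
proof -
  have "y ^ k / fact k = (\<Sum>n\<in>{k}. y ^ n / fact n)" by simp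
  also have "\<dots> \<le> (\<Sum>n. y ^ n / fact n)"
    using assms summable_exp_generic[of y]
    by (intro sum_le_suminf) (auto simp: divide_inverse ac_simps)
  also have "\<dots> = exp y" by (simp add: exp_def divide_inverse ac_simps)
  finally show ?thesis .
qed

lemma term2_bound:
  fixes q :: real
  assumes "0 \<le> q" "k \<ge> 1" "real t * q \<le> real k / 8"
  shows "real (t choose k) * q ^ k \<le> (1/2) ^ k"
proof -
  have "real (t choose k) * fact k \<le> real t ^ k"
    using binomial_fact_pow[of t k] by (metis of_nat_fact of_nat_le_iff of_nat_mult of_nat_power)
  hence c: "real (t choose k) \<le> real t ^ k / fact k" by (simp add: field_simps)
  have "real (t choose k) * q ^ k \<le> real t ^ k / fact k * q ^ k"
    using c assms by (intro mult_right_mono) auto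
  also have "\<dots> = (real t * q / real k) ^ k * (real k ^ k / fact k)"
    using assms by (simp add: field_simps power_mult_distrib)
  also have "\<dots> \<le> (real t * q / real k) ^ k * exp (real k)"
    using assms by (intro mult_left_mono pow_fact_le_exp) auto
  also have "exp (real k) = exp 1 ^ k" by (simp add: exp_of_nat_mult[symmetric])
  also have "(real t * q / real k) ^ k * exp 1 ^ k = (real t * q / real k * exp 1) ^ k"
    by (simp only: power_mult_distrib)
  also have "\<dots> \<le> (1/2) ^ k"
  proof (intro power_mono)
    have kp: "real k > 0" using assms by simp
    have "real t * q / real k \<le> 1/8" using assms kp by (simp add: field_simps)
    moreover have "exp (1::real) \<le> 3" by (rule exp_le)
    moreover have "0 \<le> real t * q / real k" using assms by simp
    ultimately have "real t * q / real k * exp 1 \<le> 1/8 * 3"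
      by (intro mult_mono) auto
    thus "real t * q / real k * exp 1 \<le> 1/2" by linarith
    show "0 \<le> real t * q / real k * exp 1" using assms by simp
  qed
  finally show ?thesis .
qed



lemma term1_bound:
  fixes p :: real
  assumes "0 \<le> p" "p \<le> 1" "real d * p \<le> 1/2" "8 \<le> real m * p ^ r" "L \<le> 2 * k1"
  shows "real (L choose k1) * (1 - p^r*(1-p)^d)^(m*k1) \<le> (1/2) ^ L"
proof -
  define g where "g = p^r*(1-p)^d"
  have "1 - real d * p \<le> (1 - p)^d"
    using Bernoulli_inequality[of "-p" d] assms by simp
  hence "1/2 \<le> (1-p)^d" using assms by simp
  hence gl: "p^r / 2 \<le> g" unfolding g_def using assms
    by (metis mult_left_mono mult.commute times_divide_eq_right mult_1 zero_le_power)
  have "p^r \<le> 1" "(1-p)^d \<le> 1" "0 \<le> (1-p)^d" using assms by (simp_all add: power_le_one)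
  hence g1: "g \<le> 1" "0 \<le> g" unfolding g_def using mult_le_one[of "p^r" "(1-p)^d"] assms by simp_all
  have "(1 - g)^m \<le> exp (-g) ^ m"
    using g1 by (intro power_mono) (use exp_ge_add_one_self[of "-g"] in auto)
  also have "\<dots> = exp (- (g * real m))" by (simp add: exp_of_nat_mult[symmetric] mult.commute)
  also have "\<dots> \<le> exp (-4)"
  proof -
    have "real m * p^r \<le> real m * (g*2)" using gl by (intro mult_left_mono) auto
    thus ?thesis using assms by (simp add: algebra_simps)
  qed
  also have "exp (-4::real) \<le> 1/16"
  proof -
    have "(2::real) \<le> exp 1" using exp_ge_add_one_self[of 1] by simp
    hence "(2::real)^4 \<le> exp 1 ^ 4" by (intro power_mono) auto
    also have "exp 1 ^ 4 = exp (4::real)" by (simp add: exp_of_nat_mult[symmetric])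
    finally have "16 \<le> exp (4::real)" by simp
    thus ?thesis by (simp add: exp_minus field_simps)
  qed
  finally have gm: "(1 - g)^m \<le> 1/16" .
  have "real (L choose k1) * (1 - g)^(m*k1) \<le> 2^L * (1/16)^k1"
  proof (intro mult_mono)
    show "real (L choose k1) \<le> 2^L" using binomial_le_pow2[of L k1]
      by (metis of_nat_le_iff of_nat_numeral of_nat_power)
    show "(1 - g)^(m*k1) \<le> (1/16)^k1"
      unfolding power_mult using gm g1 by (intro power_mono) auto
  qed (use g1 in auto)
  also have "(2::real)^L * (1/16)^k1 \<le> (1/2)^L"
  proof -
    have "(4::real)^L \<le> 4^(2*k1)" using assms by (intro power_increasing) auto
    also have "(4::real)^(2*k1) = 16^k1" by (simp add: power_mult)
    finally have "(2::real)^L * 2^L \<le> 16^k1" by (simp add: power_mult_distrib[symmetric])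
    thus ?thesis by (simp add: field_simps power_divide)
  qed
  finally show ?thesis unfolding g_def .
qed



lemma Nmax_bound:
  assumes "incl_disjunct t n T d h r x" "d \<ge> 1" "r \<ge> 1"
  shows "n \<le> 2^t + d + r"
proof (cases "n < d + r")
  case True thus ?thesis by simp
next
  case False
  obtain z y where zy: "z > 0" "disjunct t n T d r z" using assms(1) unfolding incl_disjunct_def by blast
  have "inj_on (col t T) {1..n}"
  proof (rule inj_onI, rule ccontr)
    fix j j' assume jj: "j \<in> {1..n}" "j' \<in> {1..n}" "col t T j = col t T j'" "j \<noteq> j'"
    define R where "R = {1..n} - {j,j'}"
    have cR: "card R = n - 2" unfolding R_def using jj by (subst card_Diff_subset) auto
    obtain B0 where B0: "B0 \<subseteq> R" "card B0 = r - 1"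
    proof -
      have "r - 1 \<le> card R" using cR False assms by simp
      thus ?thesis using obtain_subset_with_card_n[of "r - 1" R] that by blast
    qed
    have fR: "finite R" unfolding R_def by auto
    have "card (R - B0) = n - 2 - (r - 1)" using B0 cR fR by (simp add: card_Diff_subset finite_subset)
    then obtain A0 where A0: "A0 \<subseteq> R - B0" "card A0 = d - 1"
    proof -
      have "d - 1 \<le> card (R - B0)" using \<open>card (R - B0) = n - 2 - (r - 1)\<close> False assms by simp
      thus ?thesis using obtain_subset_with_card_n[of "d - 1" "R - B0"] that by blast
    qed
    define A where "A = insert j' A0"
    define B where "B = insert j B0"
    have fA0: "finite A0" "finite B0" using A0 B0 fR finite_subset by blast+
    have nA: "j' \<notin> A0" "j \<notin> A0" using A0 unfolding R_def by auto
    have nB: "j \<notin> B0" "j' \<notin> B0" using B0 unfolding R_def by auto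
    have dis: "A0 \<inter> B0 = {}" using A0 by auto
    have AB: "A \<subseteq> {1..n}" "B \<subseteq> {1..n}" "A \<inter> B = {}" "card A = d" "card B = r"
    proof -
      show "A \<subseteq> {1..n}" using A0 jj unfolding A_def R_def by auto
      show "B \<subseteq> {1..n}" using B0 jj unfolding B_def R_def by auto
      show "A \<inter> B = {}" using nA nB dis jj(4) unfolding A_def B_def by auto
      show "card A = d" using fA0 nA A0 assms(2) unfolding A_def by simp
      show "card B = r" using fA0 nB B0 assms(3) unfolding B_def by simp
    qed
    hence "Zval t T A B \<ge> z" using zy unfolding disjunct_def by blast
    moreover have "({1..t} \<inter> (\<Inter>j\<in>B. col t T j)) - (\<Union>j\<in>A. col t T j) = {}"
    proof -
      have "(\<Inter>i\<in>B. col t T i) \<subseteq> col t T j" unfolding B_def by blast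
      moreover have "col t T j' \<subseteq> (\<Union>i\<in>A. col t T i)" unfolding A_def by blast
      ultimately show ?thesis using jj(3) by blast
    qed
    ultimately show False using zy unfolding Zval_def by (metis card.empty not_le)
  qed
  moreover have "col t T ` {1..n} \<subseteq> Pow {1..t}" unfolding col_def by auto
  ultimately have "card {1..n} \<le> card (Pow {1..t})" by (intro card_inj_on_le) auto
  thus ?thesis by (simp add: card_Pow)
qed

lemma Nmax_ge:
  assumes "incl_disjunct t n T d h r x" "d \<ge> 1" "r \<ge> 1"
  shows "n \<le> Nmax t d h r x"
  unfolding Nmax_def
  by (rule Greatest_le_nat[where b="2^t + d + r"]) (use assms Nmax_bound in blast)+




lemma choose_le_pow': "N \<ge> 1 \<Longrightarrow> d \<le> D \<Longrightarrow> (N choose d) \<le> N ^ D"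
proof -
  assume a: "N \<ge> 1" "d \<le> D"
  have "N choose d \<le> N ^ d"
    by (cases "d \<le> N") (simp_all add: binomial_le_pow binomial_eq_0)
  also have "\<dots> \<le> N ^ D" using a by (intro power_increasing) auto
  finally show ?thesis .
qed

lemma trivial_one:
  assumes "d \<ge> 1" "r \<ge> 1" "x > 0"
  shows "incl_disjunct t 1 T d h r x"
proof -
  have "disjunct t 1 T d r x \<and> inclusive t 1 T h r 0"
  proof
  show "disjunct t 1 T d r x" unfolding disjunct_def
  proof (intro allI impI)
    fix A B :: "nat set" assume AB: "A \<subseteq> {1..1} \<and> B \<subseteq> {1..1} \<and> A \<inter> B = {} \<and> card A = d \<and> card B = r"
    hence "A \<noteq> {}" "B \<noteq> {}" using assms by auto
    hence "1 \<in> A" "1 \<in> B" using AB by auto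
    thus "x \<le> Zval t T A B" using AB by auto
  qed
  show "inclusive t 1 T h r 0" unfolding inclusive_def
  proof (intro allI impI)
    fix A B :: "nat set" assume AB: "A \<subseteq> {1..1} \<and> B \<subseteq> {1..1} \<and> A \<inter> B = {} \<and> card A = h \<and> card B = r"
    hence "B \<noteq> {}" using assms by auto
    hence "1 \<in> B" using AB by auto
    hence "A = {}" using AB by auto
    thus "Yval t T A B \<le> 0" unfolding Yval_def by simp
  qed
  qed
  thus ?thesis unfolding incl_disjunct_def using assms by (intro exI[of _ x] exI[of _ 0]) auto
qed



lemma core:
  fixes d h r t x :: nat
  assumes r: "r > 0" and d1: "d \<ge> 1" and t: "t > 0" and x: "x > 0"
  and hx: "real x \<le> real t / (8 * (8 * 512^r * real (max d h) ^ r))"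
  shows "\<exists>s. (\<exists>T. incl_disjunct t (2^s) T d h r x) \<and>
           real s \<ge> real t / (8 * (8 * 512^r) * (1 + real r) * real (max d h)^(r+1)) - 4"
proof -
  define D where "D = max d h"
  define m where "m = 8 * 512^r * D^r"
  define L where "L = t div m"
  define k1 where "k1 = L - L div 2"
  define k2 where "k2 = (L+1) div 8 + 1"
  define s where "s = (k2 - 3) div (D + r)"
  define N where "N = (2::nat)^s"
  define p :: real where "p = 1 / (512 * real D)"
  have D1: "D \<ge> 1" "d \<le> D" "h \<le> D" using d1 unfolding D_def by auto
  have m0: "m > 0" using D1 unfolding m_def by simp
  have mr: "real m = 8 * 512^r * real D ^ r" unfolding m_def by simp
  have tm: "real t < real m * (real L + 1)"
  proof -
    have "t < m * (t div m + 1)" using m0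
      by (metis add.commute div_mult_mod_eq mod_less_divisor mult.commute nat_add_left_cancel_less distrib_left mult_1_right)
    hence "real t < real (m * (L + 1))" unfolding L_def by linarith
    thus ?thesis by (simp add: algebra_simps)
  qed
  have tmL: "real t / real m \<le> real L + 1" using tm m0 by (simp add: field_simps)
  have x8: "8 * x \<le> L"
  proof -
    have "real x \<le> real t / (8 * real m)" using hx unfolding mr D_def by simp
    also have "\<dots> < (real L + 1) / 8" using tm m0 by (simp add: field_simps)
    finally have "real (8 * x) < real (L + 1)" by simp
    thus ?thesis by linarith
  qed
  have k2ge: "real k2 \<ge> (real L + 1) / 8"
  proof -
    have "L + 1 \<le> 8 * ((L+1) div 8 + 1)" by presburger
    hence "real (L + 1) \<le> 8 * real k2" unfolding k2_def by linarith
    thus ?thesis by simp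
  qed
  have sbound: "real s \<ge> real t / (8 * (8 * 512^r) * (1 + real r) * real D^(r+1)) - 4"
  proof -
    have Dr: "D + r > 0" using D1 by simp
    have "k2 - 3 < (s + 1) * (D + r)" unfolding s_def using Dr
      by (metis add.commute div_mult_mod_eq mod_less_divisor mult.commute nat_add_left_cancel_less distrib_left mult_1_right)
    hence "k2 \<le> 3 + (s + 1) * (D + r)" by arith
    hence "real k2 \<le> real (3 + (s + 1) * (D + r))" by (simp only: of_nat_le_iff)
    hence "real k2 - 3 \<le> (real s + 1) * (real D + real r)" by (simp add: algebra_simps)
    moreover have "real k2 \<ge> real t / (8 * real m)"
    proof -
      have "real m * (real L + 1) \<le> real m * (8 * real k2)" using k2ge by (intro mult_left_mono) auto
      hence "real t \<le> (8 * real m) * real k2" using tm by (simp add: algebra_simps)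
      thus ?thesis using m0 by (simp add: field_simps)
    qed
    ultimately have A: "real t / (8 * real m) - 3 \<le> (real s + 1) * (real D + real r)" by linarith
    have "real r * 1 \<le> real r * real D" using D1 by (intro mult_left_mono) auto
    hence DrD: "real D + real r \<le> (1 + real r) * real D" by (simp add: algebra_simps)
    have pos: "real D + real r > 0" using Dr by linarith
    have "real t / (8 * real m) / (real D + real r) - 3 \<le> real s + 1"
    proof -
      have "(real t / (8 * real m) - 3) / (real D + real r) \<le> real s + 1"
        using A pos by (subst divide_le_eq) (simp add: mult.commute)
      hence "real t / (8 * real m) / (real D + real r) - 3 / (real D + real r) \<le> real s + 1"
        by (simp add: diff_divide_distrib)
      moreover have "3 / (real D + real r) \<le> 3"
      proof -
        have ge1: "1 \<le> real D + real r" using D1 by simp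
        thus ?thesis by (simp add: divide_le_eq)
      qed
      ultimately show ?thesis by linarith
    qed
    moreover have "real t / (8 * real m) / ((1 + real r) * real D) \<le> real t / (8 * real m) / (real D + real r)"
      using DrD pos m0 by (intro divide_left_mono) auto
    moreover have "real t / (8 * real m) / ((1 + real r) * real D) = real t / (8 * (8 * 512^r) * (1 + real r) * real D^(r+1))"
      unfolding mr by (simp add: field_simps)
    ultimately show ?thesis by linarith
  qed
  have ex: "\<exists>T. incl_disjunct t N T d h r x"
  proof (cases "s = 0")
    case True
    thus ?thesis unfolding N_def using trivial_one d1 r x by auto
  next
    case False
    have Dr: "D + r > 0" using D1 by simp
    have "s * (D + r) \<le> k2 - 3" unfolding s_def by simp
    have "D + r \<le> s * (D + r)" using False by simp
    hence k2b: "k2 \<ge> 3 + (D + r)" using \<open>s * (D + r) \<le> k2 - 3\<close> D1 by linarith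
    hence k25: "k2 \<ge> 5" using D1 r by arith
    have L31: "k2 \<le> L" "k1 \<le> L" "L \<le> 2 * k1" "k2 \<ge> 1" "k2 \<ge> 3"
    proof -
      have q8: "8 * ((L+1) div 8) \<le> L + 1" by simp
      have m2: "L div 2 * 2 + L mod 2 = L" "L mod 2 < 2" by (rule div_mult_mod_eq, simp)
      show "k2 \<le> L" "k1 \<le> L" "L \<le> 2 * k1" "k2 \<ge> 1" "k2 \<ge> 3"
        using k25 q8 m2 unfolding k2_def k1_def by linarith+
    qed
    have p01: "0 \<le> p" "p \<le> 1" using D1 unfolding p_def by (simp_all add: field_simps)
    have t1: "real (L choose k1) * (1 - p^r*(1-p)^d)^(m*k1) \<le> (1/2)^L"
    proof (rule term1_bound[OF p01])
      show "real d * p \<le> 1/2" using D1 unfolding p_def by (simp add: field_simps)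
      have pr: "p ^ r = 1 / (512^r * real D^r)" unfolding p_def by (simp add: power_divide power_mult_distrib)
      have "real m * p ^ r = 8" unfolding mr pr using D1 by simp
      thus "8 \<le> real m * p ^ r" by simp
    qed (use L31 in auto)
    have t2: "real (t choose k2) * (real h * p^(r+1))^k2 \<le> (1/2)^k2"
    proof (rule term2_bound)
      show "0 \<le> real h * p^(r+1)" using p01 by simp
      show "k2 \<ge> 1" using L31 by simp
      have "real t * (real h * p^(r+1)) \<le> real t * (real D * p^(r+1))"
        using D1 p01 by (intro mult_left_mono mult_right_mono) auto
      also have "\<dots> = real t / (64 * real m)"
      proof -
        have pr: "p ^ (r+1) = 1 / (512^(r+1) * real D^(r+1))" unfolding p_def by (simp add: power_divide power_mult_distrib)
        have "real D * p^(r+1) = 1 / (512^(r+1) * real D^r)" unfolding pr using D1 by simp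
        also have "\<dots> = 1 / (64 * real m)" unfolding mr by simp
        finally show ?thesis by simp
      qed
      also have "\<dots> \<le> (real L + 1) / 64" using tmL m0 by (simp add: field_simps)
      also have "\<dots> \<le> real k2 / 8" using k2ge by simp
      finally show "real t * (real h * p^(r+1)) \<le> real k2 / 8" .
    qed
    have N1: "N \<ge> 1" unfolding N_def by simp
    have cnt1: "real ((N choose d) * (N choose r)) \<le> 2^(k2-3)"
    proof -
      have "(N choose d) * (N choose r) \<le> N^D * N^r"
        using choose_le_pow'[OF N1, of d D] choose_le_pow'[OF N1, of r r] D1 by (intro mult_le_mono) auto
      also have "N^D * N^r = 2^(s * (D + r))" unfolding N_def by (simp add: power_mult[symmetric] power_add algebra_simps)
      also have "\<dots> \<le> 2^(k2-3)" using \<open>s * (D + r) \<le> k2 - 3\<close> by (intro power_increasing) auto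
      finally show ?thesis by (metis of_nat_le_iff of_nat_numeral of_nat_power)
    qed
    have cnt2: "real ((N choose h) * (N choose r)) \<le> 2^(k2-3)"
    proof -
      have "(N choose h) * (N choose r) \<le> N^D * N^r"
        using choose_le_pow'[OF N1, of h D] choose_le_pow'[OF N1, of r r] D1 by (intro mult_le_mono) auto
      also have "N^D * N^r = 2^(s * (D + r))" unfolding N_def by (simp add: power_mult[symmetric] power_add algebra_simps)
      also have "\<dots> \<le> 2^(k2-3)" using \<open>s * (D + r) \<le> k2 - 3\<close> by (intro power_increasing) auto
      finally show ?thesis by (metis of_nat_le_iff of_nat_numeral of_nat_power)
    qed
    have half: "(2::real)^(k2-3) * (1/2)^k2 = 1/8"
    proof -
      have e: "k2 = (k2 - 3) + 3" using L31 by simp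
      have "(2::real)^k2 = 2^(k2-3) * 2^3" by (subst e) (simp only: power_add)
      hence "(2::real)^k2 = 2^(k2-3) * 8" by simp
      thus ?thesis by (simp add: field_simps power_divide)
    qed
    have big: "real ((N choose d) * (N choose r)) * (real (L choose k1) * (1 - p^r*(1-p)^d)^(m*k1))
          + real ((N choose h) * (N choose r)) * (real (t choose k2) * (real h * p^(r+1))^k2)
          \<le> 2^(k2-3) * (1/2)^L + 2^(k2-3) * (1/2)^k2"
    proof (intro add_mono mult_mono t1 t2 cnt1 cnt2)
      have "p^r \<le> 1" "(1-p)^d \<le> 1" "0 \<le> (1-p)^d" using p01 by (simp_all add: power_le_one)
      hence "0 \<le> 1 - p^r*(1-p)^d" using mult_le_one[of "p^r" "(1-p)^d"] p01 by simp
      thus "0 \<le> real (L choose k1) * (1 - p^r*(1-p)^d)^(m*k1)" by simp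
      show "0 \<le> real (t choose k2) * (real h * p^(r+1))^k2" using p01 by simp
    qed auto
    have "(1/2::real)^L \<le> (1/2)^k2" using L31 by (intro power_decreasing) auto
    hence "2^(k2-3) * (1/2::real)^L \<le> 2^(k2-3) * (1/2)^k2" by (intro mult_left_mono) auto
    hence "2^(k2-3) * (1/2::real)^L + 2^(k2-3) * (1/2)^k2 \<le> 1/4" using half by linarith
    with big have sum: "real ((N choose d) * (N choose r)) * (real (L choose k1) * (1 - p^r*(1-p)^d)^(m*k1))
          + real ((N choose h) * (N choose r)) * (real (t choose k2) * (real h * p^(r+1))^k2) < 1" by linarith
    have Lm: "L * m \<le> t" unfolding L_def by (simp add: mult.commute)
    obtain T where T: "disjunct t N T d r (L + 1 - k1)" "inclusive t N T h r (k2 - 1)"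
      using exist_matrix[OF p01 Lm L31(2) sum] by blast
    have "x + (k2 - 1) \<le> L + 1 - k1"
    proof -
      have q8: "8 * ((L+1) div 8) \<le> L + 1" by simp
      have m2: "L div 2 * 2 + L mod 2 = L" "L mod 2 < 2" by (rule div_mult_mod_eq, simp)
      show ?thesis using x8 q8 m2 unfolding k1_def k2_def by linarith
    qed
    hence "int x \<le> int (L + 1 - k1) - int (k2 - 1)" by linarith
    moreover have "L + 1 - k1 > 0" using L31 by simp
    ultimately show ?thesis unfolding incl_disjunct_def using T by blast
  qed
  show ?thesis using ex sbound unfolding N_def D_def by blast
qed



theorem theorem3p1:
  fixes r :: nat
  assumes "r > 0"
  shows "\<exists>c0 c :: real. c0 > 0 \<and> c > 0 \<and>
    (\<forall>d h :: nat. d \<ge> 1 \<longrightarrow>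
      (\<exists>eps :: nat \<Rightarrow> real. eps \<longlonglongrightarrow> 0 \<and>
        (\<forall>t x :: nat. t > 0 \<longrightarrow> x > 0 \<longrightarrow>
            real x \<le> c0 / real (max d h) ^ r * real t \<longrightarrow>
            Rate t d h r x \<ge> (c + eps t) / real (max d h) ^ (r + 1))))"
proof -
  define c0 :: real where "c0 = 1 / (8 * (8 * 512^r))"
  define c :: real where "c = 1 / (8 * (8 * 512^r) * (1 + real r))"
  have c0p: "c0 > 0" and cp: "c > 0" unfolding c0_def c_def by simp_all
  have main: "\<forall>d h :: nat. d \<ge> 1 \<longrightarrow>
      (\<exists>eps :: nat \<Rightarrow> real. eps \<longlonglongrightarrow> 0 \<and>
        (\<forall>t x :: nat. t > 0 \<longrightarrow> x > 0 \<longrightarrow>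
            real x \<le> c0 / real (max d h) ^ r * real t \<longrightarrow>
            Rate t d h r x \<ge> (c + eps t) / real (max d h) ^ (r + 1)))"
  proof (intro allI impI)
    fix d h :: nat assume d1: "1 \<le> d"
    define D where "D = max d h"
    have D1: "real D \<ge> 1" unfolding D_def using d1 by simp
    show "\<exists>eps :: nat \<Rightarrow> real. eps \<longlonglongrightarrow> 0 \<and>
        (\<forall>t x :: nat. t > 0 \<longrightarrow> x > 0 \<longrightarrow>
            real x \<le> c0 / real (max d h) ^ r * real t \<longrightarrow>
            Rate t d h r x \<ge> (c + eps t) / real (max d h) ^ (r + 1))"
    proof (intro exI[of _ "\<lambda>t. - 4 * real D^(r+1) / real t"] conjI allI impI)
      show "(\<lambda>t. - 4 * real D^(r+1) / real t) \<longlonglongrightarrow> 0" by (rule lim_const_over_n)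
      fix t x :: nat assume t: "0 < t" and x: "0 < x" and hx: "real x \<le> c0 / real (max d h) ^ r * real t"
      have hx': "real x \<le> real t / (8 * (8 * 512^r * real (max d h) ^ r))"
        using hx unfolding c0_def by (simp add: field_simps)
      obtain s where s: "\<exists>T. incl_disjunct t (2^s) T d h r x"
        "real s \<ge> real t / (8 * (8 * 512^r) * (1 + real r) * real (max d h)^(r+1)) - 4"
        using core[OF assms d1 t x hx'] by blast
      obtain T where T: "incl_disjunct t (2^s) T d h r x" using s(1) by blast
      have Nge: "2^s \<le> Nmax t d h r x" using Nmax_ge[OF T d1] assms by simp
      have Npos: "0 < Nmax t d h r x" using Nge by (metis less_le_trans one_le_numeral one_le_power zero_less_one)
      have "real s = log 2 (2 ^ s)" by simp
      also have "\<dots> \<le> log 2 (real (Nmax t d h r x))"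
      proof -
        have "(2::real)^s \<le> real (Nmax t d h r x)" using Nge
          by (metis of_nat_le_iff of_nat_numeral of_nat_power)
        thus ?thesis using Npos by (subst log_le_cancel_iff) auto
      qed
      finally have sR: "real s / real t \<le> Rate t d h r x"
        unfolding Rate_def using t by (intro divide_right_mono) auto
      have DD: "real (max d h) = real D" unfolding D_def by simp
      have Dp: "real D ^ (r+1) > 0" using D1 by simp
      have "(c + - 4 * real D^(r+1) / real t) / real D ^ (r + 1)
          = (c * real t / real D^(r+1) - 4) / real t"
      proof -
        have gen: "(c + - 4 * X / real t) / X = (c * real t / X - 4) / real t" if "X > 0" for X :: real
          using that t by (simp add: field_simps)
        show ?thesis by (rule gen[OF Dp])
      qed
      also have "c * real t / real D^(r+1) = real t / (8 * (8 * 512^r) * (1 + real r) * real D^(r+1))"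
        unfolding c_def by simp
      also have "(real t / (8 * (8 * 512^r) * (1 + real r) * real D^(r+1)) - 4) / real t \<le> real s / real t"
        using s(2) t unfolding DD by (intro divide_right_mono) auto
      finally show "(c + - 4 * real D^(r+1) / real t) / real (max d h) ^ (r + 1) \<le> Rate t d h r x"
        using sR unfolding DD by linarith
    qed
  qed
  show ?thesis using main c0p cp by blast
qed


end
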